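(* In the algebraic decision tree model, any algorithm that finds the elimination order of a set of $n$ growing disks in the plane, or of a set of $n$ growing squares in the plane, requires $\Omega(n\log n)$ time.
   Context: Growing prioritized disks: centers $p_1,\dots,p_n\in\mathbb{R}^2$ and growth rates $v_1,\dots,v_n>0$; at time $t\ge0$ disk $D_i$ is centered at $p_i$ with radius $tv_i$ (for squares: the axis-aligned square centered at $p_i$ with edge length $2v_it$). Smaller index means higher priority; $t(i,j)$ is the time at which objects $i$ and $j$ would first touch (for disks $|p_ip_j|/(v_i+v_j)$). Whenever objects $i<j$ touch at time $t(i,j)$ and neither has been removed before, object $j$ is removed at that time and object $i$ keeps growing. The elimination order is the sequence of objects sorted by the times at which they are removed (object $1$ is never removed). *)

theory Defs
  imports Complex_Main
begin

datatype pexpr = PConst real | PVar nat | PAdd pexpr pexpr | PMul pexpr pexpr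

fun peval :: "pexpr \<Rightarrow> (nat \<Rightarrow> real) \<Rightarrow> real" where
  "peval (PConst c) z = c"
| "peval (PVar k) z = z k"
| "peval (PAdd p q) z = peval p z + peval q z"
| "peval (PMul p q) z = peval p z * peval q z"

fun pdeg :: "pexpr \<Rightarrow> nat" where
  "pdeg (PConst c) = 0"
| "pdeg (PVar k) = 1"
| "pdeg (PAdd p q) = max (pdeg p) (pdeg q)"
| "pdeg (PMul p q) = pdeg p + pdeg q"

datatype 'a adt = Leaf 'a | Node pexpr "'a adt" "'a adt" "'a adt"

fun adt_eval :: "'a adt \<Rightarrow> (nat \<Rightarrow> real) \<Rightarrow> 'a" where
  "adt_eval (Leaf a) z = a"
| "adt_eval (Node p tn tz tp) z =
     (if peval p z < 0 then adt_eval tn z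
      else if peval p z = 0 then adt_eval tz z else adt_eval tp z)"

fun adt_depth :: "'a adt \<Rightarrow> nat" where
  "adt_depth (Leaf a) = 0"
| "adt_depth (Node p tn tz tp) = 1 + max (adt_depth tn) (max (adt_depth tz) (adt_depth tp))"

fun adt_degree :: "'a adt \<Rightarrow> nat" where
  "adt_degree (Leaf a) = 0"
| "adt_degree (Node p tn tz tp) = max (pdeg p) (max (adt_degree tn) (max (adt_degree tz) (adt_degree tp)))"

text \<open>An input of n objects is encoded as z :: nat \<Rightarrow> real; object i (0-based,
  smaller index = higher priority) has center (z (3i), z (3i+1)) and growth rate z (3i+2).\<close>
definition cx :: "(nat \<Rightarrow> real) \<Rightarrow> nat \<Rightarrow> real" where "cx z i = z (3*i)"
definition cy :: "(nat \<Rightarrow> real) \<Rightarrow> nat \<Rightarrow> real" where "cy z i = z (3*i+1)"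
definition rate :: "(nat \<Rightarrow> real) \<Rightarrow> nat \<Rightarrow> real" where "rate z i = z (3*i+2)"

text \<open>Touching times: disks (Euclidean distance) and axis-aligned squares (edge
  length 2 v t, i.e. Chebyshev distance).\<close>
definition disk_time :: "(nat \<Rightarrow> real) \<Rightarrow> nat \<Rightarrow> nat \<Rightarrow> real" where
  "disk_time z i j = sqrt ((cx z i - cx z j)^2 + (cy z i - cy z j)^2) / (rate z i + rate z j)"

definition square_time :: "(nat \<Rightarrow> real) \<Rightarrow> nat \<Rightarrow> nat \<Rightarrow> real" where
  "square_time z i j = max \<bar>cx z i - cx z j\<bar> \<bar>cy z i - cy z j\<bar> / (rate z i + rate z j)"

text \<open>Event simulation: among the currently alive objects, the pair i < j with the
  smallest touching time touches next (all other alive pairs touch later); object j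
  is removed.  The fuel argument counts the remaining removals.\<close>
fun elim :: "nat \<Rightarrow> (nat \<Rightarrow> nat \<Rightarrow> real) \<Rightarrow> nat set \<Rightarrow> nat list" where
  "elim 0 tm A = []"
| "elim (Suc k) tm A =
     (let ij = ARG_MIN (\<lambda>(i, j). tm i j) ij. (fst ij \<in> A \<and> snd ij \<in> A \<and> fst ij < snd ij)
      in snd ij # elim k tm (A - {snd ij}))"

text \<open>Elimination order of objects 0..n-1 (object 0 is never removed).\<close>
definition elim_order :: "(nat \<Rightarrow> nat \<Rightarrow> real) \<Rightarrow> nat \<Rightarrow> nat list" where
  "elim_order tm n = elim (n - 1) tm {..<n}"

text \<open>Admissible inputs: positive growth rates and all touching times pairwise
  distinct (general position, so the elimination order is unambiguous).\<close>
definition admissible :: "((nat \<Rightarrow> real) \<Rightarrow> nat \<Rightarrow> nat \<Rightarrow> real) \<Rightarrow> nat \<Rightarrow> (nat \<Rightarrow> real) \<Rightarrow> bool" where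
  "admissible tf n z \<longleftrightarrow> (\<forall>i<n. rate z i > 0) \<and>
     inj_on (\<lambda>(i, j). tf z i j) {(i, j). i < j \<and> j < n}"

definition solves_elim :: "((nat \<Rightarrow> real) \<Rightarrow> nat \<Rightarrow> nat \<Rightarrow> real) \<Rightarrow> nat \<Rightarrow> nat list adt \<Rightarrow> bool" where
  "solves_elim tf n T \<longleftrightarrow> (\<forall>z. admissible tf n z \<longrightarrow> adt_eval T z = elim_order (tf z) n)"

end

theory Submission imports Defs "HOL-Combinatorics.Permutations" begin

fun adt_leaves :: "'a adt \<Rightarrow> 'a set" where
  "adt_leaves (Leaf a) = {a}"
| "adt_leaves (Node p tn tz tp) = adt_leaves tn \<union> adt_leaves tz \<union> adt_leaves tp"

lemma adt_eval_in_leaves: "adt_eval T z \<in> adt_leaves T"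
  by (induction T) auto

lemma adt_leaves_card: "finite (adt_leaves T) \<and> card (adt_leaves T) \<le> 3 ^ adt_depth T"
proof (induction T)
  case (Leaf a) then show ?case by simp
next
  case (Node p tn tz tp)
  let ?D = "max (adt_depth tn) (max (adt_depth tz) (adt_depth tp))"
  have "card (adt_leaves tn) \<le> 3 ^ ?D"
    using Node(1) by (meson le_trans max.cobounded1 one_le_numeral power_increasing)
  moreover have "card (adt_leaves tz) \<le> 3 ^ ?D"
    using Node(2) by (meson le_trans max.cobounded1 max.cobounded2 one_le_numeral power_increasing)
  moreover have "card (adt_leaves tp) \<le> 3 ^ ?D"
    using Node(3) by (meson le_trans max.cobounded2 one_le_numeral power_increasing)
  moreover have "card (adt_leaves (Node p tn tz tp)) \<le> card (adt_leaves tn) + card (adt_leaves tz) + card (adt_leaves tp)"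
    by (metis (no_types, lifting) add_le_mono card_Un_le le_refl le_trans adt_leaves.simps(2))
  moreover have "(3::nat) ^ Suc ?D = 3 * 3 ^ ?D" by simp
  ultimately have "card (adt_leaves (Node p tn tz tp)) \<le> 3 ^ Suc ?D" by linarith
  then have "card (adt_leaves (Node p tn tz tp)) \<le> 3 ^ adt_depth (Node p tn tz tp)" by simp
  moreover have "finite (adt_leaves (Node p tn tz tp))" using Node by simp
  ultimately show ?case by blast
qed

lemma pow_diff_mono:
  fixes a b :: nat assumes "b < a" shows "2^(a-1) \<le> (2::nat)^a - 2^b \<and> (2::nat)^a - 2^b < 2^a"
proof -
  obtain k where k: "a = Suc k" using assms by (cases a) auto
  have Y: "(2::nat)^b \<le> 2^k" using assms k by (intro power_increasing) auto
  have ar: "X \<le> 2*X - Y \<and> 2*X - Y < 2*X" if "0<Y" "Y \<le> X" for X Y :: nat using that by arith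
  show ?thesis using ar[OF _ Y] k by simp
qed

lemma pow_diff_inj:
  fixes a b c d :: nat assumes "b < a" "d < c" "(2::nat)^a - 2^b = 2^c - 2^d"
  shows "a = c \<and> b = d"
proof -
  have ac: "a = c"
  proof (rule ccontr)
    assume "a \<noteq> c"
    then consider "a < c" | "c < a" by linarith
    then show False
    proof cases
      case 1
      have "(2::nat)^a - 2^b < 2^a" using pow_diff_mono[OF assms(1)] by blast
      also have "\<dots> \<le> 2^(c-1)" using 1 by (intro power_increasing) auto
      also have "\<dots> \<le> 2^c - 2^d" using pow_diff_mono[OF assms(2)] by blast
      finally show False using assms(3) by simp
    next
      case 2
      have "(2::nat)^c - 2^d < 2^c" using pow_diff_mono[OF assms(2)] by blast
      also have "\<dots> \<le> 2^(a-1)" using 2 by (intro power_increasing) auto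
      also have "\<dots> \<le> 2^a - 2^b" using pow_diff_mono[OF assms(1)] by blast
      finally show False using assms(3) by simp
    qed
  qed
  have "(2::nat)^b \<le> 2^a" "(2::nat)^d \<le> 2^a" using assms ac by (auto intro: power_increasing)
  then have "(2::nat)^b = 2^d" using assms(3) ac by (metis diff_diff_cancel)
  then show ?thesis using ac by simp
qed

lemma pow_fact_le_exp:
  fixes x :: real assumes "0 \<le> x" shows "x ^ m / fact m \<le> exp x"
proof -
  have "(\<Sum>n\<in>{m}. x ^ n /\<^sub>R fact n) \<le> (\<Sum>n. x ^ n /\<^sub>R fact n)"
    using assms summable_exp_generic[of x]
    by (intro sum_le_suminf) auto
  then show ?thesis by (simp add: exp_def divide_inverse mult.commute)
qed

lemma ln_fact_ge: "real m * ln (real m) - real m \<le> ln (fact m)"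
proof (cases "m = 0")
  case True then show ?thesis by simp
next
  case False
  have "real m ^ m / fact m \<le> exp (real m)" by (rule pow_fact_le_exp) simp
  then have "real m ^ m \<le> exp (real m) * fact m" by (simp add: divide_le_eq)
  then have "ln (real m ^ m) \<le> ln (exp (real m) * fact m)" using False by (subst ln_le_cancel_iff) auto
  then show ?thesis using False by (simp add: ln_mult ln_realpow)
qed


lemma argmin_unique:
  fixes f :: "'b \<Rightarrow> real"
  assumes "P k" "\<And>x. P x \<Longrightarrow> x \<noteq> k \<Longrightarrow> f k < f x"
  shows "arg_min f P = k"
  apply (rule arg_minI[where P=P and f=f and x=k])
  using assms by (auto, force)

lemma pow_diff_real:
  fixes a b :: nat assumes "b < a"
  shows "(2::real)^a - 2^b = real ((2::nat)^a - 2^b)"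
proof -
  have "(2::nat)^b \<le> 2^a" using assms by (intro power_increasing) auto
  then show ?thesis by (simp add: of_nat_diff)
qed

lemma abs_pow_ge2:
  fixes a b :: nat assumes "a \<noteq> b" "1 \<le> a" "1 \<le> b"
  shows "2 \<le> \<bar>(2::real)^a - 2^b\<bar>"
proof -
  have k: "2 \<le> (2::real)^x - 2^y" if "y < x" "1 \<le> y" for x y :: nat
  proof -
    have "2^(x-1) \<le> (2::nat)^x - 2^y" using pow_diff_mono[OF that(1)] by simp
    moreover have "(2::nat)^y \<le> 2^(x-1)" using that by (intro power_increasing) auto
    moreover have "(2::nat) \<le> 2^y" using that by (metis power_increasing power_one_right one_le_numeral)
    ultimately have "2 \<le> (2::nat)^x - 2^y" by linarith
    then show ?thesis unfolding pow_diff_real[OF that(1)] by linarith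
  qed
  show ?thesis
  proof (cases "b < a")
    case True then show ?thesis using k assms by fastforce
  next
    case False then have "a < b" using assms by linarith
    then show ?thesis using k[of a b] assms by linarith
  qed
qed

lemma abs_pow_inj:
  fixes a b c d :: nat assumes "a \<noteq> b" "c \<noteq> d" "\<bar>(2::real)^a - 2^b\<bar> = \<bar>(2::real)^c - 2^d\<bar>"
  shows "(a = c \<and> b = d) \<or> (a = d \<and> b = c)"
proof -
  have k: "x = z \<and> y = w" if "y < x" "w < z" "(2::real)^x - 2^y = 2^z - 2^w" for x y z w :: nat
  proof -
    have "(2::nat)^x - 2^y = 2^z - 2^w"
      using that(3) unfolding pow_diff_real[OF that(1)] pow_diff_real[OF that(2)] by (metis of_nat_eq_iff)
    then show ?thesis using pow_diff_inj[of y x w z] that by blast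
  qed
  have p: "(2::real)^x - 2^y > 0" if "y < x" for x y :: nat
    using that by simp
  show ?thesis
  proof (cases "b < a")
    case T1: True
    show ?thesis
    proof (cases "d < c")
      case True then show ?thesis using k[of b a d c] T1 assms(3) p[OF T1] p[OF True] by auto
    next
      case False then have "c < d" using assms by linarith
      then show ?thesis using k[of b a c d] T1 assms(3) p[OF T1] p[of c d] by auto
    qed
  next
    case F1: False then have F1: "a < b" using assms by linarith
    show ?thesis
    proof (cases "d < c")
      case True then show ?thesis using k[of a b d c] F1 assms(3) p[OF F1] p[OF True] by auto
    next
      case False then have "c < d" using assms by linarith
      then show ?thesis using k[of a b c d] F1 assms(3) p[OF F1] p[of c d] by auto
    qed
  qed
qed

lemma insert_rem: "X = insert a Y \<Longrightarrow> a \<notin> Y \<Longrightarrow> a \<noteq> 0 \<Longrightarrow> insert (0::nat) X - {a} = insert 0 Y"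
  by blast

definition Zin :: "nat \<Rightarrow> (nat \<Rightarrow> nat) \<Rightarrow> nat \<Rightarrow> real" where
  "Zin n \<sigma> k = (if k mod 3 = 0 then (if k div 3 = 0 then 0 else 2^(\<sigma> (k div 3)))
      else if k mod 3 = 1 then 0 else (if k div 3 = 0 then 1 else 1/2^n))"

lemma cx_Zin: "cx (Zin n \<sigma>) i = (if i = 0 then 0 else 2^(\<sigma> i))"
  unfolding cx_def Zin_def by simp
lemma cy_Zin: "cy (Zin n \<sigma>) i = 0"
  unfolding cy_def Zin_def by simp
lemma rate_Zin: "rate (Zin n \<sigma>) i = (if i = 0 then 1 else 1/2^n)"
proof -
  have "(3*i+2) mod 3 = 2" "(3*i+2) div 3 = i" by presburger+
  then show ?thesis unfolding rate_def Zin_def by simp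
qed

lemma den_pos: "(0::real) < 1 + 1/2^n"
  by (simp add: add_pos_pos)

definition G :: "nat \<Rightarrow> (nat \<Rightarrow> nat) \<Rightarrow> nat \<Rightarrow> nat \<Rightarrow> real" where
  "G n \<sigma> i j = \<bar>cx (Zin n \<sigma>) i - cx (Zin n \<sigma>) j\<bar> / (rate (Zin n \<sigma>) i + rate (Zin n \<sigma>) j)"

lemma disk_G: "disk_time (Zin n \<sigma>) = G n \<sigma>"
  unfolding disk_time_def G_def fun_eq_iff cy_Zin by simp

lemma square_G: "square_time (Zin n \<sigma>) = G n \<sigma>"
  unfolding square_time_def G_def fun_eq_iff cy_Zin by simp

context
  fixes n :: nat and \<sigma> :: "nat \<Rightarrow> nat"
  assumes perm: "\<sigma> permutes {1..<n}"
begin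

lemma sig_range: "j \<in> {1..<n} \<Longrightarrow> 1 \<le> \<sigma> j \<and> \<sigma> j < n"
  using permutes_in_image[OF perm] by auto

lemma G0: assumes "j \<in> {1..<n}" shows "G n \<sigma> 0 j = 2^(\<sigma> j) / (1 + 1/2^n)"
  using assms unfolding G_def cx_Zin rate_Zin by simp

lemma G0_lt: assumes "j \<in> {1..<n}" shows "G n \<sigma> 0 j < 2^n"
proof -
  have "(2::real)^(\<sigma> j) < 2^n" using sig_range[OF assms] by simp
  moreover have "(2::real)^(\<sigma> j) / (1 + 1/2^n) \<le> 2^(\<sigma> j)"
    using den_pos[of n] by (simp add: divide_le_eq)
  ultimately show ?thesis using G0[OF assms] by linarith
qed

lemma G0_mono: assumes "j \<in> {1..<n}" "j' \<in> {1..<n}" "\<sigma> j < \<sigma> j'"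
  shows "G n \<sigma> 0 j < G n \<sigma> 0 j'"
  unfolding G0[OF assms(1)] G0[OF assms(2)]
  using assms(3) by (intro divide_strict_right_mono) (auto simp: add_pos_pos)

lemma Gij: assumes "i \<in> {1..<n}" "j \<in> {1..<n}" "i \<noteq> j"
  shows "G n \<sigma> i j = \<bar>(2::real)^(\<sigma> i) - 2^(\<sigma> j)\<bar> * 2^n / 2"
  using assms unfolding G_def cx_Zin rate_Zin by simp

lemma Gij_ge: assumes "i \<in> {1..<n}" "j \<in> {1..<n}" "i \<noteq> j"
  shows "2^n \<le> G n \<sigma> i j"
proof -
  have "\<sigma> i \<noteq> \<sigma> j" using assms permutes_inj[OF perm] by (meson injD)
  then have "2 \<le> \<bar>(2::real)^(\<sigma> i) - 2^(\<sigma> j)\<bar>"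
    using sig_range assms by (intro abs_pow_ge2) auto
  then show ?thesis unfolding Gij[OF assms] by simp
qed

lemma G_inj: "inj_on (\<lambda>(i, j). G n \<sigma> i j) {(i, j). i < j \<and> j < n}"
proof (rule inj_onI, clarsimp)
  fix i j i' j' assume a: "i < j" "j < n" "i' < j'" "j' < n" "G n \<sigma> i j = G n \<sigma> i' j'"
  have inj: "inj \<sigma>" using permutes_inj[OF perm] .
  have jS: "j \<in> {1..<n}" "j' \<in> {1..<n}" using a by auto
  show "i = i' \<and> j = j'"
  proof (cases "i = 0")
    case True
    show ?thesis
    proof (cases "i' = 0")
      case True':True
      have "(2::real)^(\<sigma> j) = 2^(\<sigma> j')"
        using a(5) G0[OF jS(1)] G0[OF jS(2)] True True' den_pos[of n] by (simp add: divide_cancel_right)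
      then have "\<sigma> j = \<sigma> j'" by simp
      then show ?thesis using inj True True' by (simp add: injD)
    next
      case False
      have "i' \<in> {1..<n}" using False a by auto
      then show ?thesis using Gij_ge[of i' j'] G0_lt[OF jS(1)] a jS True by auto
    qed
  next
    case False
    have iS: "i \<in> {1..<n}" using False a by auto
    show ?thesis
    proof (cases "i' = 0")
      case True
      then show ?thesis using Gij_ge[OF iS jS(1)] G0_lt[OF jS(2)] a by auto
    next
      case F': False
      have iS': "i' \<in> {1..<n}" using F' a by auto
      have ne: "\<sigma> i \<noteq> \<sigma> j" "\<sigma> i' \<noteq> \<sigma> j'" using a inj by (auto dest: injD)
      have "\<bar>(2::real)^(\<sigma> i) - 2^(\<sigma> j)\<bar> = \<bar>(2::real)^(\<sigma> i') - 2^(\<sigma> j')\<bar>"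
      proof -
        have "i \<noteq> j" "i' \<noteq> j'" using a by auto
        then show ?thesis using a(5) unfolding Gij[OF iS jS(1) \<open>i \<noteq> j\<close>] Gij[OF iS' jS(2) \<open>i' \<noteq> j'\<close>] by simp
      qed
      from abs_pow_inj[OF ne this] have "(\<sigma> i = \<sigma> i' \<and> \<sigma> j = \<sigma> j') \<or> (\<sigma> i = \<sigma> j' \<and> \<sigma> j = \<sigma> i')" .
      then have "(i = i' \<and> j = j') \<or> (i = j' \<and> j = i')" using inj by (auto dest: injD)
      then show ?thesis using a by auto
    qed
  qed
qed

lemma adm: "admissible tf n (Zin n \<sigma>)" if "tf (Zin n \<sigma>) = G n \<sigma>"
  unfolding admissible_def that using G_inj by (auto simp: rate_Zin)

lemma invS: "l \<in> {1..<n} \<Longrightarrow> inv \<sigma> l \<in> {1..<n} \<and> \<sigma> (inv \<sigma> l) = l"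
  using permutes_in_image[OF permutes_inv[OF perm]] permutes_inverses[OF perm] by auto

lemma elim_G: "n - m = k \<Longrightarrow> 1 \<le> m \<Longrightarrow> m \<le> n \<Longrightarrow>
   elim k (G n \<sigma>) (insert 0 (inv \<sigma> ` {m..<n})) = map (inv \<sigma>) [m..<n]"
proof (induction k arbitrary: m)
  case 0 then show ?case by simp
next
  case (Suc k)
  let ?A = "insert 0 (inv \<sigma> ` {m..<n})"
  let ?j0 = "inv \<sigma> m"
  have mS: "m \<in> {1..<n}" using Suc by auto
  have j0: "?j0 \<in> {1..<n}" "\<sigma> ?j0 = m" using invS[OF mS] by auto
  have AS: "x \<in> inv \<sigma> ` {m..<n} \<Longrightarrow> x \<in> {1..<n} \<and> m \<le> \<sigma> x" for x
    using invS Suc.prems by force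
  have am: "arg_min (\<lambda>(i, j). G n \<sigma> i j) (\<lambda>ij. fst ij \<in> ?A \<and> snd ij \<in> ?A \<and> fst ij < snd ij) = (0, ?j0)"
  proof (rule argmin_unique)
    show "fst (0, ?j0) \<in> ?A \<and> snd (0, ?j0) \<in> ?A \<and> fst (0, ?j0) < snd (0, ?j0)"
      using Suc.prems j0 by auto
  next
    fix p assume P: "fst p \<in> ?A \<and> snd p \<in> ?A \<and> fst p < snd p" and ne: "p \<noteq> (0, ?j0)"
    obtain i j where p: "p = (i, j)" by fastforce
    have jA: "j \<in> inv \<sigma> ` {m..<n}" using P p by auto
    note jj = AS[OF jA]
    show "(case (0, ?j0) of (i, j) \<Rightarrow> G n \<sigma> i j) < (case p of (i, j) \<Rightarrow> G n \<sigma> i j)"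
    proof (cases "i = 0")
      case True
      have "j \<noteq> ?j0" using ne p True by auto
      then have "\<sigma> j \<noteq> m" using jj permutes_inverses(2)[OF perm, of j] by auto
      then have "\<sigma> ?j0 < \<sigma> j" using jj j0 by auto
      then show ?thesis using G0_mono[OF j0(1)] jj p True by auto
    next
      case False
      then have iA: "i \<in> inv \<sigma> ` {m..<n}" using P p by auto
      have "2^n \<le> G n \<sigma> i j" using Gij_ge AS[OF iA] jj P p by auto
      then show ?thesis using G0_lt[OF j0(1)] p by auto
    qed
  qed
  have rem: "?A - {?j0} = insert 0 (inv \<sigma> ` {Suc m..<n})"
  proof -
    have "{m..<n} = insert m {Suc m..<n}" using mS by auto
    then have "inv \<sigma> ` {m..<n} = insert ?j0 (inv \<sigma> ` {Suc m..<n})" by simp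
    moreover have "?j0 \<notin> inv \<sigma> ` {Suc m..<n}"
    proof
      assume "?j0 \<in> inv \<sigma> ` {Suc m..<n}"
      then obtain l where "l \<in> {Suc m..<n}" "inv \<sigma> l = ?j0" by auto
      then have "l = m" "Suc m \<le> l" using injD[OF permutes_inj[OF permutes_inv[OF perm]]] by auto
      then show False by simp
    qed
    moreover have "?j0 \<noteq> 0" using j0 by auto
    ultimately show ?thesis by (rule insert_rem)
  qed
  have "[m..<n] = m # [Suc m..<n]" using Suc.prems by (simp add: upt_conv_Cons)
  moreover have "elim (Suc k) (G n \<sigma>) ?A = ?j0 # elim k (G n \<sigma>) (?A - {?j0})"
    unfolding elim.simps(2) Let_def am by (simp only: snd_conv)
  moreover have "elim k (G n \<sigma>) (?A - {?j0}) = map (inv \<sigma>) [Suc m..<n]"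
    unfolding rem using Suc.IH[of "Suc m"] Suc.prems by linarith
  ultimately show ?case by (simp only: list.map)
qed

lemma elim_order_G: assumes "1 \<le> n" shows "elim_order (G n \<sigma>) n = map (inv \<sigma>) [1..<n]"
proof -
  have "insert 0 (inv \<sigma> ` {1..<n}) = {..<n}"
    using permutes_image[OF permutes_inv[OF perm]] assms by auto
  then show ?thesis unfolding elim_order_def using elim_G[of 1 "n-1"] assms by simp
qed

end


lemma depth_lower:
  assumes n: "1 \<le> n" and tfG: "\<And>\<sigma>. \<sigma> permutes {1..<n} \<Longrightarrow> tf (Zin n \<sigma>) = G n \<sigma>"
    and sol: "solves_elim tf n T"
  shows "fact (n - 1) \<le> (3::nat) ^ adt_depth T"
proof -
  let ?P = "{\<sigma>. \<sigma> permutes {1..<n}}"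
  let ?f = "\<lambda>\<sigma>. map (inv \<sigma>) [1..<n]"
  have sub: "?f ` ?P \<subseteq> adt_leaves T"
  proof
    fix x assume "x \<in> ?f ` ?P"
    then obtain \<sigma> where s: "\<sigma> permutes {1..<n}" "x = ?f \<sigma>" by auto
    have "adt_eval T (Zin n \<sigma>) = elim_order (tf (Zin n \<sigma>)) n"
      using sol adm[where tf=tf, OF s(1) tfG[OF s(1)]] unfolding solves_elim_def by blast
    also have "\<dots> = ?f \<sigma>" using tfG[OF s(1)] elim_order_G[OF s(1) n] by simp
    finally show "x \<in> adt_leaves T" using adt_eval_in_leaves s(2) by metis
  qed
  have inj: "inj_on ?f ?P"
  proof (rule inj_onI)
    fix \<sigma> \<tau> assume s0: "\<sigma> \<in> ?P" "\<tau> \<in> ?P" "?f \<sigma> = ?f \<tau>"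
    then have s: "\<sigma> permutes {1..<n}" "\<tau> permutes {1..<n}" "map (inv \<sigma>) [1..<n] = map (inv \<tau>) [1..<n]" by auto
    have "inv \<sigma> x = inv \<tau> x" for x
    proof (cases "x \<in> {1..<n}")
      case True then show ?thesis using s(3) map_eq_conv by fastforce
    next
      case False then show ?thesis
        using permutes_not_in[OF permutes_inv[OF s(1)]] permutes_not_in[OF permutes_inv[OF s(2)]] by simp
    qed
    then have "inv \<sigma> = inv \<tau>" by auto
    then show "\<sigma> = \<tau>" using permutes_inv_inv[OF s(1)] permutes_inv_inv[OF s(2)] by metis
  qed
  have "card (?f ` ?P) = fact (n - 1)"
    using card_image[OF inj] card_permutations[of "{1..<n}" "n-1"] by simp
  moreover have "card (?f ` ?P) \<le> card (adt_leaves T)"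
    using card_mono[OF _ sub] adt_leaves_card by blast
  ultimately show ?thesis using adt_leaves_card[of T] by linarith
qed

lemma asym:
  assumes "100 \<le> n" and "fact (n - 1) \<le> (3::nat) ^ D"
  shows "1 / (8 * ln 3) * real n * ln (real n) \<le> real D"
proof -
  define m where "m = n - 1"
  have m: "99 \<le> m" "real n = real m + 1" using assms(1) unfolding m_def by auto
  have "exp (4::real) = exp 1 ^ 4" by (simp flip: exp_of_nat_mult)
  also have "\<dots> \<le> 3 ^ 4" using exp_le by (intro power_mono) auto
  also have "\<dots> \<le> real m" using m by simp
  finally have "ln (exp 4) \<le> ln (real m)" using m by (subst ln_le_cancel_iff) auto
  then have lm4: "4 \<le> ln (real m)" by simp
  have ln2: "ln 2 \<le> ln (real m)" using m by (subst ln_le_cancel_iff) auto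
  have "ln (real n) \<le> ln (2 * real m)" using m by (subst ln_le_cancel_iff) auto
  also have "\<dots> = ln 2 + ln (real m)" using m by (simp add: ln_mult)
  finally have lnn: "ln (real n) \<le> 2 * ln (real m)" using ln2 by linarith
  have "real n * ln (real n) \<le> (2 * real m) * (2 * ln (real m))"
    using m lnn by (intro mult_mono) auto
  then have A: "real n * ln (real n) \<le> 4 * (real m * ln (real m))" by simp
  have B: "real m \<le> real m * ln (real m) / 4" using lm4 m by simp
  have "real (fact m) \<le> real (3 ^ D)" using assms(2) unfolding m_def by (simp only: of_nat_le_iff)
  then have "ln (real (fact m)) \<le> ln (real (3 ^ D))" by (subst ln_le_cancel_iff) (auto simp: fact_gt_zero)
  then have C: "ln (fact m :: real) \<le> real D * ln 3" by (simp add: ln_realpow)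
  have "real n * ln (real n) / 8 \<le> real D * ln 3"
    using A B C ln_fact_ge[of m] by linarith
  then show ?thesis by (simp add: field_simps)
qed

theorem theorem19:
  shows "(\<forall>d::nat. \<exists>c>0. \<exists>N::nat. \<forall>n\<ge>N. \<forall>T::nat list adt.
            adt_degree T \<le> d \<longrightarrow> solves_elim disk_time n T \<longrightarrow>
            real (adt_depth T) \<ge> c * real n * ln (real n)) \<and>
         (\<forall>d::nat. \<exists>c>0. \<exists>N::nat. \<forall>n\<ge>N. \<forall>T::nat list adt.
            adt_degree T \<le> d \<longrightarrow> solves_elim square_time n T \<longrightarrow>
            real (adt_depth T) \<ge> c * real n * ln (real n))"
proof -
  have pos: "(0::real) < 1 / (8 * ln 3)" by simp
  have gen: "\<forall>d::nat. \<exists>c>0. \<exists>N::nat. \<forall>n\<ge>N. \<forall>T::nat list adt.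
            adt_degree T \<le> d \<longrightarrow> solves_elim tf n T \<longrightarrow>
            real (adt_depth T) \<ge> c * real n * ln (real n)"
    if tfG: "\<And>n \<sigma>. tf (Zin n \<sigma>) = G n \<sigma>" for tf
  proof (intro allI exI[of _ "1 / (8 * ln 3)"] conjI pos exI[of _ "100::nat"] impI)
    fix d n :: nat and T :: "nat list adt"
    assume "100 \<le> n" "solves_elim tf n T"
    then have "fact (n - 1) \<le> (3::nat) ^ adt_depth T"
      using depth_lower[of n tf T] tfG by auto
    then show "1 / (8 * ln 3) * real n * ln (real n) \<le> real (adt_depth T)"
      using asym \<open>100 \<le> n\<close> by blast
  qed
  show ?thesis using gen[of disk_time] gen[of square_time] disk_G square_G by blast
qed

end
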